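(* Let $G$ be a group given by a presentation $\langle X\mid R\rangle$ in which every $x\in X$ satisfies $x^2=e$ and every relation in $R$ has even length. Let $I=X\setminus\{x\}$ for some $x\in X$, and let $w\in G$ with $w\neq e$. Then $w\in {}^{I}G$ if and only if all reduced expressions of $w$ begin with $x$.
   Context: Every $w\in G$ can be written as a product $x_1^{a_1}\cdots x_r^{a_r}$ with $x_j\in X$, $a_j=\pm1$; the length $l(w)$ is the smallest such $r$, and a reduced expression of $w$ is an expression of $w$ as a product of $l(w)$ elements of $X\cup X^{-1}$. The length of a relation $u=v$ ($u,v$ in the free group $F(X)$) is the length of the word $uv^{-1}$ in $F(X)$. For $I\subseteq X$, ${}^{I}G=\{w\in G: l(yw)>l(w)\ \text{for all } y\in I\}$. *)

theory Defs
  imports "HOL-Algebra.Group"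
begin

text \<open>Words over X union X^-1: a letter is a pair (y, b); (y, True) stands for y,
  (y, False) stands for y^-1.\<close>

type_synonym 'a word = "('a \<times> bool) list"

definition is_word :: "'a set \<Rightarrow> 'a word \<Rightarrow> bool" where
  "is_word X w \<longleftrightarrow> set w \<subseteq> X \<times> UNIV"

inductive free_equiv :: "'a word \<Rightarrow> 'a word \<Rightarrow> bool" where
  fe_refl: "free_equiv u u"
| fe_sym: "free_equiv u v \<Longrightarrow> free_equiv v u"
| fe_trans: "free_equiv u v \<Longrightarrow> free_equiv v w \<Longrightarrow> free_equiv u w"
| fe_cancel: "free_equiv (u @ [(a, b), (a, \<not> b)] @ v) (u @ v)"

definition free_length :: "'a word \<Rightarrow> nat" where
  "free_length w = (LEAST n. \<exists>w'. free_equiv w w' \<and> length w' = n)"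

text \<open>Equality in the group <X | R>, where relators r in R stand for relations r = e.\<close>
inductive pres_equiv :: "'a word set \<Rightarrow> 'a word \<Rightarrow> 'a word \<Rightarrow> bool" for R where
  pe_refl: "pres_equiv R u u"
| pe_sym: "pres_equiv R u v \<Longrightarrow> pres_equiv R v u"
| pe_trans: "pres_equiv R u v \<Longrightarrow> pres_equiv R v w \<Longrightarrow> pres_equiv R u w"
| pe_cancel: "pres_equiv R (u @ [(a, b), (a, \<not> b)] @ v) (u @ v)"
| pe_rel: "r \<in> R \<Longrightarrow> pres_equiv R (u @ r @ v) (u @ v)"

definition eval_word :: "('g, 'm) monoid_scheme \<Rightarrow> ('a \<Rightarrow> 'g) \<Rightarrow> 'a word \<Rightarrow> 'g" where
  "eval_word G f w = foldr (\<lambda>(y, b) acc. (if b then f y else inv\<^bsub>G\<^esub> (f y)) \<otimes>\<^bsub>G\<^esub> acc) w \<one>\<^bsub>G\<^esub>"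

definition presentation :: "('g, 'm) monoid_scheme \<Rightarrow> 'a set \<Rightarrow> 'a word set \<Rightarrow> ('a \<Rightarrow> 'g) \<Rightarrow> bool" where
  "presentation G X R f \<longleftrightarrow> group G \<and> f ` X \<subseteq> carrier G \<and> (\<forall>r\<in>R. is_word X r)
     \<and> (\<forall>g\<in>carrier G. \<exists>w. is_word X w \<and> eval_word G f w = g)
     \<and> (\<forall>u v. is_word X u \<longrightarrow> is_word X v \<longrightarrow> (eval_word G f u = eval_word G f v \<longleftrightarrow> pres_equiv R u v))"

definition len :: "('g, 'm) monoid_scheme \<Rightarrow> 'a set \<Rightarrow> ('a \<Rightarrow> 'g) \<Rightarrow> 'g \<Rightarrow> nat" where
  "len G X f g = (LEAST n. \<exists>w. is_word X w \<and> length w = n \<and> eval_word G f w = g)"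

definition reduced_expr :: "('g, 'm) monoid_scheme \<Rightarrow> 'a set \<Rightarrow> ('a \<Rightarrow> 'g) \<Rightarrow> 'a word \<Rightarrow> 'g \<Rightarrow> bool" where
  "reduced_expr G X f w g \<longleftrightarrow> is_word X w \<and> eval_word G f w = g \<and> length w = len G X f g"

definition min_left :: "('g, 'm) monoid_scheme \<Rightarrow> 'a set \<Rightarrow> ('a \<Rightarrow> 'g) \<Rightarrow> 'a set \<Rightarrow> 'g set" where
  "min_left G X f I = {w \<in> carrier G. \<forall>y\<in>I. len G X f (f y \<otimes>\<^bsub>G\<^esub> w) > len G X f w}"

end

theory Submission
  imports Defs
begin

lemma eval_Nil: "eval_word G f [] = \<one>\<^bsub>G\<^esub>"
  by (simp add: eval_word_def)

lemma eval_Cons: "eval_word G f ((y,b)#w) = (if b then f y else inv\<^bsub>G\<^esub> (f y)) \<otimes>\<^bsub>G\<^esub> eval_word G f w"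
  by (simp add: eval_word_def)

lemma eval_carrier:
  assumes "group G" "f ` X \<subseteq> carrier G" "is_word X w"
  shows "eval_word G f w \<in> carrier G"
  using assms(3)
proof (induction w)
  case Nil then show ?case using assms by (simp add: eval_Nil group.is_monoid monoid.one_closed)
next
  case (Cons a w)
  obtain y b where a: "a = (y,b)" by fastforce
  have "is_word X w" "y \<in> X" using Cons.prems a by (auto simp: is_word_def)
  then show ?case using Cons.IH assms a
    by (auto simp: eval_Cons group.inv_closed group.is_monoid monoid.m_closed)
qed

lemma free_equiv_parity: "free_equiv u v \<Longrightarrow> even (length u) = even (length v)"
  by (induction rule: free_equiv.induct) auto

lemma even_rel:
  assumes "even (free_length r)" shows "even (length r)"
proof -
  have "\<exists>w'. free_equiv r w' \<and> length w' = free_length r"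
    unfolding free_length_def by (rule LeastI_ex) (use fe_refl in blast)
  then obtain w' where "free_equiv r w'" "length w' = free_length r" by blast
  then show ?thesis using assms free_equiv_parity by metis
qed

lemma pres_equiv_parity:
  assumes "\<forall>r\<in>R. even (free_length r)"
  shows "pres_equiv R u v \<Longrightarrow> even (length u) = even (length v)"
  by (induction rule: pres_equiv.induct) (use assms even_rel in auto)

lemma len_witness:
  assumes "presentation G X R f" "g \<in> carrier G"
  shows "\<exists>w. is_word X w \<and> length w = len G X f g \<and> eval_word G f w = g"
  unfolding len_def
  by (rule LeastI_ex) (use assms in \<open>auto simp: presentation_def\<close>)

lemma len_le:
  assumes "is_word X w"
  shows "len G X f (eval_word G f w) \<le> length w"
  unfolding len_def by (rule Least_le) (use assms in auto)

lemma parity_eval: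
  assumes "presentation G X R f" "\<forall>r\<in>R. even (free_length r)"
    "is_word X u" "is_word X v" "eval_word G f u = eval_word G f v"
  shows "even (length u) = even (length v)"
  using assms pres_equiv_parity unfolding presentation_def by blast

lemma gen_sq:
  assumes "presentation G X R f" "\<forall>y\<in>X. [(y, True), (y, True)] \<in> R" "y \<in> X"
  shows "f y \<otimes>\<^bsub>G\<^esub> f y = \<one>\<^bsub>G\<^esub>"
proof -
  have grp: "group G" and fX: "f ` X \<subseteq> carrier G" using assms(1) by (auto simp: presentation_def)
  have w: "is_word X [(y, True), (y, True)]" "is_word X []" using assms(3) by (auto simp: is_word_def)
  have "pres_equiv R ([] @ [(y, True), (y, True)] @ []) ([] @ [])"
    using assms(2,3) pe_rel by blast
  then have "eval_word G f [(y, True), (y, True)] = eval_word G f []"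
    using assms(1) w unfolding presentation_def by auto
  then show ?thesis using grp fX assms(3)
    by (auto simp: eval_Cons eval_Nil group.is_monoid monoid.r_one)
qed

lemma gen_inv:
  assumes "presentation G X R f" "\<forall>y\<in>X. [(y, True), (y, True)] \<in> R" "y \<in> X"
  shows "inv\<^bsub>G\<^esub> (f y) = f y"
proof -
  have grp: "group G" and fX: "f ` X \<subseteq> carrier G" using assms(1) by (auto simp: presentation_def)
  show ?thesis using gen_sq[OF assms] grp fX assms(3)
    by (meson group.inv_equality image_subset_iff)
qed

lemma len_step:
  assumes P: "presentation G X R f" and S: "\<forall>y\<in>X. [(y, True), (y, True)] \<in> R"
    and E: "\<forall>r\<in>R. even (free_length r)" and y: "y \<in> X" and g: "g \<in> carrier G"
  shows "len G X f (f y \<otimes>\<^bsub>G\<^esub> g) + 1 = len G X f g \<or> len G X f (f y \<otimes>\<^bsub>G\<^esub> g) = len G X f g + 1"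
proof -
  have grp: "group G" and fX: "f ` X \<subseteq> carrier G" using P by (auto simp: presentation_def)
  have fy: "f y \<in> carrier G" using fX y by auto
  have yg: "f y \<otimes>\<^bsub>G\<^esub> g \<in> carrier G" using grp fy g by (simp add: group.is_monoid monoid.m_closed)
  obtain u where u: "is_word X u" "length u = len G X f g" "eval_word G f u = g"
    using len_witness[OF P g] by blast
  obtain v where v: "is_word X v" "length v = len G X f (f y \<otimes>\<^bsub>G\<^esub> g)" "eval_word G f v = f y \<otimes>\<^bsub>G\<^esub> g"
    using len_witness[OF P yg] by blast
  have yu: "is_word X ((y,True)#u)" "is_word X ((y,True)#v)" using u v y by (auto simp: is_word_def)
  have e1: "eval_word G f ((y,True)#u) = f y \<otimes>\<^bsub>G\<^esub> g" using u by (simp add: eval_Cons)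
  have "f y \<otimes>\<^bsub>G\<^esub> (f y \<otimes>\<^bsub>G\<^esub> g) = g"
    using gen_sq[OF P S y] grp fy g
    by (metis group.is_monoid monoid.l_one monoid.m_assoc)
  then have e2: "eval_word G f ((y,True)#v) = g" using v by (simp add: eval_Cons)
  have l1: "len G X f (f y \<otimes>\<^bsub>G\<^esub> g) \<le> len G X f g + 1"
    using len_le[OF yu(1), of G f] e1 u by simp
  have l2: "len G X f g \<le> len G X f (f y \<otimes>\<^bsub>G\<^esub> g) + 1"
    using len_le[OF yu(2), of G f] e2 v by simp
  have "even (length ((y,True)#u)) = even (length v)"
    using parity_eval[OF P E yu(1) v(1)] e1 v by simp
  then have "even (len G X f g + 1) = even (len G X f (f y \<otimes>\<^bsub>G\<^esub> g))" using u v by simp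
  moreover have "\<And>a c::nat. even (c + 1) = even a \<Longrightarrow> a \<le> c + 1 \<Longrightarrow> c \<le> a + 1 \<Longrightarrow> a + 1 = c \<or> a = c + 1"
    by presburger
  ultimately show ?thesis using l1 l2 by blast
qed

theorem lemma3p2:
  fixes G :: "('g, 'm) monoid_scheme" and X :: "'a set" and R :: "'a word set"
    and f :: "'a \<Rightarrow> 'g" and x :: 'a and w :: 'g
  assumes "presentation G X R f"
    and "\<forall>y\<in>X. [(y, True), (y, True)] \<in> R"
    and "\<forall>r\<in>R. even (free_length r)"
    and "x \<in> X"
    and "w \<in> carrier G" and "w \<noteq> \<one>\<^bsub>G\<^esub>"
  shows "w \<in> min_left G X f (X - {x}) \<longleftrightarrow>
         (\<forall>e. reduced_expr G X f e w \<longrightarrow> fst (hd e) = x)"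
proof -
  have grp: "group G" and fX: "f ` X \<subseteq> carrier G" using assms(1) by (auto simp: presentation_def)
  show ?thesis
  proof
    assume m: "w \<in> min_left G X f (X - {x})"
    show "\<forall>e. reduced_expr G X f e w \<longrightarrow> fst (hd e) = x"
    proof (intro allI impI)
      fix e assume r: "reduced_expr G X f e w"
      then have e: "is_word X e" "eval_word G f e = w" "length e = len G X f w"
        by (auto simp: reduced_expr_def)
      have "e \<noteq> []" using e assms(6) by (auto simp: eval_Nil)
      then obtain y b e' where ee: "e = (y,b)#e'" by (metis list.exhaust prod.exhaust)
      have y: "y \<in> X" and e': "is_word X e'" using e ee by (auto simp: is_word_def)
      have fy: "f y \<in> carrier G" using fX y by auto
      have "w = f y \<otimes>\<^bsub>G\<^esub> eval_word G f e'"
        using e ee gen_inv[OF assms(1,2) y] by (cases b) (simp_all add: eval_Cons)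
      moreover have "eval_word G f e' \<in> carrier G" using eval_carrier[OF grp fX e'] .
      ultimately have "f y \<otimes>\<^bsub>G\<^esub> w = eval_word G f e'"
        using gen_sq[OF assms(1,2) y] grp fy
        by (metis group.is_monoid monoid.l_one monoid.m_assoc)
      then have "len G X f (f y \<otimes>\<^bsub>G\<^esub> w) < len G X f w"
        using len_le[OF e', of G f] e ee by simp
      then show "fst (hd e) = x" using m y ee unfolding min_left_def by force
    qed
  next
    assume A: "\<forall>e. reduced_expr G X f e w \<longrightarrow> fst (hd e) = x"
    show "w \<in> min_left G X f (X - {x})"
      unfolding min_left_def
    proof (intro CollectI conjI ballI assms(5))
      fix y assume yI: "y \<in> X - {x}"
      then have y: "y \<in> X" by auto
      have fy: "f y \<in> carrier G" using fX y by auto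
      have yg: "f y \<otimes>\<^bsub>G\<^esub> w \<in> carrier G" using grp fy assms(5) by (simp add: group.is_monoid monoid.m_closed)
      show "len G X f (f y \<otimes>\<^bsub>G\<^esub> w) > len G X f w"
      proof (rule ccontr)
        assume "\<not> ?thesis"
        then have l: "len G X f (f y \<otimes>\<^bsub>G\<^esub> w) + 1 = len G X f w"
          using len_step[OF assms(1-3) y assms(5)] by auto
        obtain v where v: "is_word X v" "length v = len G X f (f y \<otimes>\<^bsub>G\<^esub> w)" "eval_word G f v = f y \<otimes>\<^bsub>G\<^esub> w"
          using len_witness[OF assms(1) yg] by blast
        have "f y \<otimes>\<^bsub>G\<^esub> (f y \<otimes>\<^bsub>G\<^esub> w) = w"
          using gen_sq[OF assms(1,2) y] grp fy assms(5)
          by (metis group.is_monoid monoid.l_one monoid.m_assoc)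
        then have "reduced_expr G X f ((y,True)#v) w"
          using v l y by (auto simp: reduced_expr_def eval_Cons is_word_def)
        then show False using A yI by force
      qed
    qed
  qed
qed

end
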